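(* Fix $\delta>0$, and for $r\in\mathbb R$ let $\mathrm A_r(\xi):=e^{\delta\langle\xi\rangle^{1/2}}\langle\xi\rangle^r$ for $\xi\in\mathbb R$. Let $s\ge1$ and $c\in(0,1)$. Then, for $\xi,\eta\in\mathbb R$: (i) if $|\xi-\eta|\le c|\eta|$, then $|\mathrm A_s(\xi)-\mathrm A_s(\eta)|\lesssim\mathrm A_{s-\frac34}(\eta)\,\mathrm A_1(\xi-\eta)\,\langle\xi\rangle^{\frac14}$; (ii) if $|\eta|\le c|\xi-\eta|$, then $|\mathrm A_s(\xi)-\mathrm A_s(\eta)|\lesssim\mathrm A_0(\eta)\,\mathrm A_s(\xi-\eta)$; (iii) if $c|\eta|\le|\xi-\eta|\le c^{-1}|\eta|$, then $|\mathrm A_s(\xi)-\mathrm A_s(\eta)|\lesssim\mathrm A_{s-1}(\eta)\,\mathrm A_1(\xi-\eta)$.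
   Context: $\langle\xi\rangle=(1+|\xi|^2)^{1/2}$. Implicit constants may depend on $s$, $c$ and $\delta$ but not on $\xi,\eta$. *)

theory Defs
  imports "HOL-Analysis.Analysis"
begin

definition jb :: "real \<Rightarrow> real" where
  "jb \<xi> = sqrt (1 + \<xi>\<^sup>2)"

definition Aw :: "real \<Rightarrow> real \<Rightarrow> real \<Rightarrow> real" where
  "Aw \<delta> r \<xi> = exp (\<delta> * jb \<xi> powr (1/2)) * jb \<xi> powr r"

end

theory Submission
  imports Defs
begin

lemma jb_ge1: "jb t \<ge> 1" unfolding jb_def by simp

lemma jb_pos: "jb t > 0" using jb_ge1[of t] by linarith

lemma jb_ne0[simp]: "jb t \<noteq> 0" using jb_pos[of t] by simp
lemma jb_abs[simp]: "\<bar>jb t\<bar> = jb t" using jb_pos[of t] by simp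

lemma jb_tri: "jb (a + b) \<le> jb a + \<bar>b\<bar>"
proof -
  have "a * b \<le> \<bar>b\<bar> * jb a"
  proof -
    have "a*b \<le> \<bar>a\<bar> * \<bar>b\<bar>" by (simp add: abs_mult[symmetric])
    moreover have "\<bar>a\<bar> \<le> jb a" unfolding jb_def by (rule real_le_rsqrt) simp
    ultimately show ?thesis by (metis abs_ge_zero mult.commute mult_right_mono order_trans)
  qed
  hence "1 + (a+b)\<^sup>2 \<le> (jb a + \<bar>b\<bar>)\<^sup>2"
    by (simp add: power2_eq_square algebra_simps jb_def)
  hence "sqrt (1 + (a+b)\<^sup>2) \<le> jb a + \<bar>b\<bar>"
    using jb_ge1[of a] by (intro real_le_lsqrt) auto
  thus ?thesis unfolding jb_def .
qed

lemma jb_diff: "\<bar>jb a - jb b\<bar> \<le> \<bar>a - b\<bar>"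
  using jb_tri[of b "a - b"] jb_tri[of a "b - a"] by auto

lemma jb_scale: assumes "\<bar>a\<bar> \<le> K * \<bar>b\<bar>" "K \<ge> 1" shows "jb a \<le> K * jb b"
proof -
  have "\<bar>a\<bar>\<^sup>2 \<le> (K * \<bar>b\<bar>)\<^sup>2" using assms by (intro power_mono) auto
  hence "a\<^sup>2 \<le> (K * \<bar>b\<bar>)\<^sup>2" by simp
  moreover have "1 \<le> K\<^sup>2" using assms by (simp add: one_le_power)
  ultimately have "1 + a\<^sup>2 \<le> K\<^sup>2 * (1 + b\<^sup>2)" by (simp add: power_mult_distrib algebra_simps)
  hence "sqrt (1 + a\<^sup>2) \<le> sqrt (K\<^sup>2 * (1 + b\<^sup>2))" by simp
  thus ?thesis using assms unfolding jb_def by (simp add: real_sqrt_mult)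
qed

lemma E_sub: assumes "0 \<le> y" "0 \<le> z" "x \<le> y + z" "\<delta> > 0"
  shows "exp (\<delta> * sqrt x) \<le> exp (\<delta> * sqrt y) * exp (\<delta> * sqrt z)"
proof -
  have "sqrt x \<le> sqrt (y + z)" using assms by simp
  also have "\<dots> \<le> sqrt y + sqrt z" by (rule sqrt_add_le_add_sqrt) (use assms in auto)
  finally have "\<delta> * sqrt x \<le> \<delta> * sqrt y + \<delta> * sqrt z" using assms
    by (metis distrib_left mult_le_cancel_left_pos)
  thus ?thesis by (simp add: exp_add[symmetric])
qed

lemma Aw_alt: "Aw \<delta> r t = exp (\<delta> * sqrt (jb t)) * jb t powr r"
  unfolding Aw_def using jb_pos[of t] by (simp add: powr_half_sqrt)

lemma f_deriv: assumes "w > 0"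
  shows "((\<lambda>u. exp (\<delta> * sqrt u) * u powr s) has_real_derivative
     exp (\<delta> * sqrt w) * (\<delta> * (inverse (sqrt w) / 2)) * w powr s + exp (\<delta> * sqrt w) * (s * w powr (s - 1))) (at w)"
  using assms by (auto intro!: derivative_eq_intros simp: field_simps)

definition ff :: "real \<Rightarrow> real \<Rightarrow> real \<Rightarrow> real" where
  "ff \<delta> s u = exp (\<delta> * sqrt u) * u powr s"

lemma f_diff: assumes "1 \<le> a" "a \<le> b" "\<delta> > 0" "s \<ge> 1"
  shows "0 \<le> ff \<delta> s b - ff \<delta> s a \<and> ff \<delta> s b - ff \<delta> s a \<le> (\<delta>/2+s) * exp (\<delta> * sqrt b) * b powr (s-1/2) * (b - a)"
proof (cases "a = b")
  case True thus ?thesis by simp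
next
  case False
  hence ab: "a < b" using assms by simp
  have "\<And>w. a \<le> w \<Longrightarrow> w \<le> b \<Longrightarrow> ((\<lambda>u. exp (\<delta> * sqrt u) * u powr s) has_real_derivative
     exp (\<delta> * sqrt w) * (\<delta> * (inverse (sqrt w) / 2)) * w powr s + exp (\<delta> * sqrt w) * (s * w powr (s - 1))) (at w)"
    using assms by (intro f_deriv) auto
  from MVT2[OF ab this] obtain w where w: "a < w" "w < b" and
    eq: "exp (\<delta> * sqrt b) * b powr s - exp (\<delta> * sqrt a) * a powr s = (b - a) * (exp (\<delta> * sqrt w) * (\<delta> * (inverse (sqrt w) / 2)) * w powr s + exp (\<delta> * sqrt w) * (s * w powr (s - 1)))"
    by blast
  have w1: "w \<ge> 1" using w assms by simp
  have "inverse (sqrt w) * w powr s = w powr (s - 1/2)"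
  proof -
    have "sqrt w = w powr (1/2)" using w1 by (simp add: powr_half_sqrt)
    hence "inverse (sqrt w) = w powr (- (1/2))" using w1 by (simp add: powr_minus)
    hence "inverse (sqrt w) * w powr s = w powr (- (1/2) + s)" by (simp only: powr_add)
    thus ?thesis by simp
  qed
  hence d: "exp (\<delta> * sqrt w) * (\<delta> * (inverse (sqrt w) / 2)) * w powr s + exp (\<delta> * sqrt w) * (s * w powr (s - 1))
     = exp (\<delta> * sqrt w) * (\<delta>/2 * w powr (s - 1/2) + s * w powr (s - 1))"
    by (simp add: algebra_simps)
  have "w powr (s - 1) \<le> w powr (s - 1/2)" using w1 by (intro powr_mono) auto
  hence "\<delta>/2 * w powr (s - 1/2) + s * w powr (s - 1) \<le> (\<delta>/2 + s) * w powr (s - 1/2)"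
    using assms by (simp add: algebra_simps)
  also have "\<dots> \<le> (\<delta>/2 + s) * b powr (s - 1/2)"
    using assms w w1 by (intro mult_left_mono powr_mono2) auto
  finally have b1: "\<delta>/2 * w powr (s - 1/2) + s * w powr (s - 1) \<le> (\<delta>/2 + s) * b powr (s - 1/2)" .
  have b2: "exp (\<delta> * sqrt w) \<le> exp (\<delta> * sqrt b)" using w assms by simp
  have nn: "0 \<le> \<delta>/2 * w powr (s - 1/2) + s * w powr (s - 1)" using assms by simp
  have "exp (\<delta> * sqrt w) * (\<delta>/2 * w powr (s - 1/2) + s * w powr (s - 1)) \<le> exp (\<delta> * sqrt b) * ((\<delta>/2 + s) * b powr (s - 1/2))"
    using b1 b2 nn by (intro mult_mono) auto
  hence "(b - a) * (exp (\<delta> * sqrt w) * (\<delta>/2 * w powr (s - 1/2) + s * w powr (s - 1))) \<le> (b - a) * (exp (\<delta> * sqrt b) * ((\<delta>/2 + s) * b powr (s - 1/2)))"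
    using ab by (intro mult_left_mono) auto
  moreover have "0 \<le> (b - a) * (exp (\<delta> * sqrt w) * (\<delta>/2 * w powr (s - 1/2) + s * w powr (s - 1)))"
    using ab nn by simp
  ultimately show ?thesis unfolding ff_def eq d by (simp only: mult_ac)
qed

lemma f_absdiff: assumes "1 \<le> x" "1 \<le> y" "\<delta> > 0" "s \<ge> 1"
  shows "\<bar>ff \<delta> s x - ff \<delta> s y\<bar> \<le> (\<delta>/2+s) * exp (\<delta> * sqrt (max x y)) * (max x y) powr (s-1/2) * \<bar>x - y\<bar>"
proof (cases "x \<le> y")
  case True
  hence "max x y = y" "\<bar>x - y\<bar> = y - x" "\<bar>ff \<delta> s x - ff \<delta> s y\<bar> = ff \<delta> s y - ff \<delta> s x"
    using f_diff[of x y \<delta> s] assms by auto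
  thus ?thesis using f_diff[of x y \<delta> s] assms True by simp
next
  case False
  hence "max x y = x" "\<bar>x - y\<bar> = x - y" "\<bar>ff \<delta> s x - ff \<delta> s y\<bar> = ff \<delta> s x - ff \<delta> s y"
    using f_diff[of y x \<delta> s] assms by auto
  thus ?thesis using f_diff[of y x \<delta> s] assms False by simp
qed

lemma powr_split: "(x::real) > 0 \<Longrightarrow> x powr s = x powr (s-1) * x"
  using powr_add[of x "s-1" 1] by simp

lemma core1: assumes "1 \<le> x" "1 \<le> y" "1 \<le> z" "\<bar>x - y\<bar> \<le> z" "x \<le> y + z" "x \<le> 2 * y" "y \<le> L * x" "L \<ge> 1" "\<delta> > 0" "s \<ge> 1"
  shows "\<bar>ff \<delta> s x - ff \<delta> s y\<bar> \<le> ((\<delta>/2+s) * 2 powr (s-1/2) * L powr (1/4)) * (exp (\<delta> * sqrt y) * y powr (s-3/4)) * (exp (\<delta> * sqrt z) * z) * x powr (1/4)"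
proof -
  let ?m = "max x y"
  have P1: "exp (\<delta> * sqrt ?m) \<le> exp (\<delta> * sqrt y) * exp (\<delta> * sqrt z)"
    using assms by (intro E_sub) auto
  have "?m powr (s-1/2) \<le> (2 * y) powr (s-1/2)" using assms by (intro powr_mono2) auto
  also have "\<dots> = 2 powr (s-1/2) * (y powr (s-3/4) * y powr (1/4))"
    using assms by (simp add: powr_mult powr_add[symmetric])
  also have "\<dots> \<le> 2 powr (s-1/2) * (y powr (s-3/4) * (L powr (1/4) * x powr (1/4)))"
  proof -
    have "y powr (1/4) \<le> (L * x) powr (1/4)" using assms by (intro powr_mono2) auto
    also have "\<dots> = L powr (1/4) * x powr (1/4)" using assms by (simp add: powr_mult)
    finally show ?thesis by (intro mult_left_mono) auto
  qed
  finally have P2: "?m powr (s-1/2) \<le> 2 powr (s-1/2) * (y powr (s-3/4) * (L powr (1/4) * x powr (1/4)))" .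
  have "\<bar>ff \<delta> s x - ff \<delta> s y\<bar> \<le> (\<delta>/2+s) * exp (\<delta> * sqrt ?m) * ?m powr (s-1/2) * \<bar>x - y\<bar>"
    using assms by (intro f_absdiff) auto
  also have "\<dots> \<le> (\<delta>/2+s) * (exp (\<delta> * sqrt y) * exp (\<delta> * sqrt z)) * (2 powr (s-1/2) * (y powr (s-3/4) * (L powr (1/4) * x powr (1/4)))) * z"
    using assms P1 P2 by (intro mult_mono) auto
  also have "\<dots> = ((\<delta>/2+s) * 2 powr (s-1/2) * L powr (1/4)) * (exp (\<delta> * sqrt y) * y powr (s-3/4)) * (exp (\<delta> * sqrt z) * z) * x powr (1/4)"
    by (simp only: mult_ac)
  finally show ?thesis .
qed

lemma core2: assumes "1 \<le> x" "1 \<le> y" "1 \<le> z" "x \<le> y + z" "x \<le> 2 * z" "y \<le> z" "\<delta> > 0" "s \<ge> 1"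
  shows "\<bar>ff \<delta> s x - ff \<delta> s y\<bar> \<le> (2 powr s + 1) * exp (\<delta> * sqrt y) * (exp (\<delta> * sqrt z) * z powr s)"
proof -
  have "ff \<delta> s x \<le> (exp (\<delta> * sqrt y) * exp (\<delta> * sqrt z)) * (2 * z) powr s"
    unfolding ff_def using assms by (intro mult_mono E_sub powr_mono2) auto
  also have "\<dots> = 2 powr s * exp (\<delta> * sqrt y) * (exp (\<delta> * sqrt z) * z powr s)"
    using assms by (simp add: powr_mult)
  finally have A: "ff \<delta> s x \<le> 2 powr s * exp (\<delta> * sqrt y) * (exp (\<delta> * sqrt z) * z powr s)" .
  have "ff \<delta> s y \<le> exp (\<delta> * sqrt y) * (exp (\<delta> * sqrt z) * z powr s)"
    unfolding ff_def using assms by (intro mult_left_mono order_trans[OF powr_mono2[of s y z]]) auto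
  moreover have "ff \<delta> s x \<ge> 0" "ff \<delta> s y \<ge> 0" unfolding ff_def by auto
  ultimately show ?thesis using A by (simp add: algebra_simps abs_if)
qed

lemma core3: assumes "1 \<le> x" "1 \<le> y" "1 \<le> z" "x \<le> y + z" "x \<le> K * y" "x \<le> K * z" "y \<le> K * z" "K \<ge> 1" "\<delta> > 0" "s \<ge> 1"
  shows "\<bar>ff \<delta> s x - ff \<delta> s y\<bar> \<le> (K powr s + K) * (exp (\<delta> * sqrt y) * y powr (s-1)) * (exp (\<delta> * sqrt z) * z)"
proof -
  have ex: "exp (\<delta> * sqrt x) \<le> exp (\<delta> * sqrt y) * exp (\<delta> * sqrt z)" using assms by (intro E_sub) auto
  have xs: "x powr s = x powr (s-1) * x" using assms by (intro powr_split) auto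
  have "x powr (s-1) \<le> (K*y) powr (s-1)" using assms by (intro powr_mono2) auto
  also have "\<dots> = K powr (s-1) * y powr (s-1)" using assms by (simp add: powr_mult)
  finally have "x powr (s-1) * x \<le> (K powr (s-1) * y powr (s-1)) * (K * z)"
    using assms by (intro mult_mono) auto
  hence "ff \<delta> s x \<le> (exp (\<delta> * sqrt y) * exp (\<delta> * sqrt z)) * ((K powr (s-1) * y powr (s-1)) * (K * z))"
    unfolding ff_def xs using assms by (intro mult_mono[OF ex \<open>x powr (s-1) * x \<le> _\<close>]) auto
  also have "\<dots> = (K powr (s-1) * K) * (exp (\<delta> * sqrt y) * y powr (s-1)) * (exp (\<delta> * sqrt z) * z)"
    by (simp only: mult_ac)
  also have "K powr (s-1) * K = K powr s" using assms powr_split[of K s] by auto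
  finally have A: "ff \<delta> s x \<le> K powr s * (exp (\<delta> * sqrt y) * y powr (s-1)) * (exp (\<delta> * sqrt z) * z)" .
  have ys: "y powr s = y powr (s-1) * y" using assms by (intro powr_split) auto
  have "ff \<delta> s y \<le> exp (\<delta> * sqrt y) * (y powr (s-1) * (exp (\<delta> * sqrt z) * (K * z)))"
  proof -
    have e1: "exp (\<delta> * sqrt z) \<ge> 1" using assms by simp
    have "y \<le> 1 * (K * z)" using assms by simp
    also have "\<dots> \<le> exp (\<delta> * sqrt z) * (K * z)" using e1 assms by (intro mult_right_mono) auto
    finally have "y \<le> exp (\<delta> * sqrt z) * (K * z)" .
    thus ?thesis unfolding ff_def ys using assms by (intro mult_left_mono) auto
  qed
  hence B: "ff \<delta> s y \<le> K * (exp (\<delta> * sqrt y) * y powr (s-1)) * (exp (\<delta> * sqrt z) * z)"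
    by (simp only: mult_ac)
  have "ff \<delta> s x \<ge> 0" "ff \<delta> s y \<ge> 0" unfolding ff_def by auto
  thus ?thesis using A B by (simp add: algebra_simps abs_if)
qed

lemma Aw_nonneg: "0 \<le> Aw \<delta> r t" unfolding Aw_def by simp

lemma abs_le_jb: "\<bar>t\<bar> \<le> jb t"
  unfolding jb_def by (rule real_le_rsqrt) simp

theorem lemma6p5:
  fixes \<delta> s c :: real
  assumes "\<delta> > 0" and "s \<ge> 1" and "0 < c" and "c < 1"
  shows "\<exists>C>0. \<forall>\<xi> \<eta> :: real.
     (\<bar>\<xi> - \<eta>\<bar> \<le> c * \<bar>\<eta>\<bar> \<longrightarrow>
        \<bar>Aw \<delta> s \<xi> - Aw \<delta> s \<eta>\<bar> \<le> C * Aw \<delta> (s - 3/4) \<eta> * Aw \<delta> 1 (\<xi> - \<eta>) * jb \<xi> powr (1/4))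
   \<and> (\<bar>\<eta>\<bar> \<le> c * \<bar>\<xi> - \<eta>\<bar> \<longrightarrow>
        \<bar>Aw \<delta> s \<xi> - Aw \<delta> s \<eta>\<bar> \<le> C * Aw \<delta> 0 \<eta> * Aw \<delta> s (\<xi> - \<eta>))
   \<and> (c * \<bar>\<eta>\<bar> \<le> \<bar>\<xi> - \<eta>\<bar> \<and> \<bar>\<xi> - \<eta>\<bar> \<le> \<bar>\<eta>\<bar> / c \<longrightarrow>
        \<bar>Aw \<delta> s \<xi> - Aw \<delta> s \<eta>\<bar> \<le> C * Aw \<delta> (s - 1) \<eta> * Aw \<delta> 1 (\<xi> - \<eta>))"
proof -
  define L where "L = 1 / (1 - c)"
  define K where "K = 1 + 1 / c"
  have L1: "L \<ge> 1" unfolding L_def using assms by simp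
  have K1: "K \<ge> 1" unfolding K_def using assms by simp
  define C1 where "C1 = (\<delta>/2+s) * 2 powr (s-1/2) * L powr (1/4)"
  define C2 where "C2 = 2 powr s + (1::real)"
  define C3 where "C3 = K powr s + K"
  have C1p: "C1 > 0" unfolding C1_def using assms L1 by simp
  have C2p: "C2 > 0" unfolding C2_def by (simp add: add_pos_nonneg)
  have C3p: "C3 > 0" unfolding C3_def using K1 by (simp add: add_nonneg_pos)
  define C where "C = C1 + C2 + C3"
  have CC1: "C1 \<le> C" "C2 \<le> C" "C3 \<le> C" unfolding C_def using C1p C2p C3p by auto
  have Cp: "C > 0" unfolding C_def using C1p C2p C3p by simp
  have AwE: "\<And>r t. Aw \<delta> r t = exp (\<delta> * sqrt (jb t)) * jb t powr r" by (rule Aw_alt)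
  have Aw1: "\<And>t. Aw \<delta> 1 t = exp (\<delta> * sqrt (jb t)) * jb t" using jb_pos by (simp add: AwE less_imp_le)
  have Aw0: "\<And>t. Aw \<delta> 0 t = exp (\<delta> * sqrt (jb t))" using jb_pos by (simp add: AwE)
  have Aff: "\<And>t. Aw \<delta> s t = ff \<delta> s (jb t)" by (simp add: AwE ff_def)
  have mono: "\<And>A B D. A \<le> B * D \<Longrightarrow> B \<le> C \<Longrightarrow> D \<ge> 0 \<Longrightarrow> A \<le> C * D"
    by (meson mult_right_mono order_trans)
  show ?thesis
  proof (intro exI[of _ C] conjI Cp allI impI)
    fix \<xi> \<eta> :: real
    let ?x = "jb \<xi>" and ?y = "jb \<eta>" and ?z = "jb (\<xi> - \<eta>)"
    have g: "1 \<le> ?x" "1 \<le> ?y" "1 \<le> ?z" by (rule jb_ge1)+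
    have xyz: "?x \<le> ?y + ?z" using jb_tri[of \<eta> "\<xi> - \<eta>"] abs_le_jb[of "\<xi> - \<eta>"] by simp
    have tri: "\<bar>\<xi>\<bar> \<le> \<bar>\<eta>\<bar> + \<bar>\<xi> - \<eta>\<bar>" using abs_triangle_ineq[of \<eta> "\<xi> - \<eta>"] by simp
    have dxy: "\<bar>?x - ?y\<bar> \<le> ?z" using jb_diff[of \<xi> \<eta>] abs_le_jb[of "\<xi> - \<eta>"] by simp
    {
      assume h: "\<bar>\<xi> - \<eta>\<bar> \<le> c * \<bar>\<eta>\<bar>"
      have "c * \<bar>\<eta>\<bar> \<le> \<bar>\<eta>\<bar>" using assms by (intro mult_left_le_one_le) auto
      hence "\<bar>\<xi>\<bar> \<le> 2 * \<bar>\<eta>\<bar>" using h by linarith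
      hence x2: "?x \<le> 2 * ?y" by (rule jb_scale) simp
      have "(1 - c) * \<bar>\<eta>\<bar> \<le> \<bar>\<xi>\<bar>" using h by (simp add: algebra_simps)
      hence "\<bar>\<eta>\<bar> \<le> L * \<bar>\<xi>\<bar>" unfolding L_def using assms by (simp add: field_simps)
      hence yL: "?y \<le> L * ?x" using L1 by (rule jb_scale)
      have "\<bar>ff \<delta> s ?x - ff \<delta> s ?y\<bar> \<le> C1 * (exp (\<delta> * sqrt ?y) * ?y powr (s-3/4)) * (exp (\<delta> * sqrt ?z) * ?z) * ?x powr (1/4)"
        unfolding C1_def by (rule core1[OF g dxy xyz x2 yL L1 assms(1,2)])
      hence "\<bar>Aw \<delta> s \<xi> - Aw \<delta> s \<eta>\<bar> \<le> C1 * (Aw \<delta> (s - 3/4) \<eta> * Aw \<delta> 1 (\<xi> - \<eta>) * jb \<xi> powr (1/4))"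
        by (simp add: Aff Aw1 AwE ff_def mult.assoc)
      from mono[OF this CC1(1)]
      show "\<bar>Aw \<delta> s \<xi> - Aw \<delta> s \<eta>\<bar> \<le> C * Aw \<delta> (s - 3/4) \<eta> * Aw \<delta> 1 (\<xi> - \<eta>) * jb \<xi> powr (1/4)"
        by (simp only: mult.assoc Aw_nonneg mult_nonneg_nonneg powr_ge_zero simp_thms)
    }
    show "\<bar>Aw \<delta> s \<xi> - Aw \<delta> s \<eta>\<bar> \<le> C * Aw \<delta> 0 \<eta> * Aw \<delta> s (\<xi> - \<eta>)" if h: "\<bar>\<eta>\<bar> \<le> c * \<bar>\<xi> - \<eta>\<bar>"
    proof -
      have "c * \<bar>\<xi> - \<eta>\<bar> \<le> \<bar>\<xi> - \<eta>\<bar>" using assms by (intro mult_left_le_one_le) auto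
      hence "\<bar>\<xi>\<bar> \<le> 2 * \<bar>\<xi> - \<eta>\<bar>" using h tri by (smt (verit))
      hence x2: "?x \<le> 2 * ?z" by (rule jb_scale) simp_all
      have "\<bar>\<eta>\<bar> \<le> 1 * \<bar>\<xi> - \<eta>\<bar>" using h \<open>c * \<bar>\<xi> - \<eta>\<bar> \<le> \<bar>\<xi> - \<eta>\<bar>\<close> by (smt (verit))
      hence yz: "?y \<le> 1 * ?z" by (rule jb_scale) simp_all
      have "\<bar>ff \<delta> s ?x - ff \<delta> s ?y\<bar> \<le> C2 * exp (\<delta> * sqrt ?y) * (exp (\<delta> * sqrt ?z) * ?z powr s)"
        unfolding C2_def using yz by (intro core2[OF g xyz x2 _ assms(1,2)]) simp
      hence "\<bar>Aw \<delta> s \<xi> - Aw \<delta> s \<eta>\<bar> \<le> C2 * (Aw \<delta> 0 \<eta> * Aw \<delta> s (\<xi> - \<eta>))"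
        by (simp add: Aff Aw0 ff_def mult.assoc)
      from mono[OF this CC1(2)] show ?thesis by (simp only: mult.assoc Aw_nonneg mult_nonneg_nonneg simp_thms)
    qed
    show "\<bar>Aw \<delta> s \<xi> - Aw \<delta> s \<eta>\<bar> \<le> C * Aw \<delta> (s - 1) \<eta> * Aw \<delta> 1 (\<xi> - \<eta>)" if h: "c * \<bar>\<eta>\<bar> \<le> \<bar>\<xi> - \<eta>\<bar> \<and> \<bar>\<xi> - \<eta>\<bar> \<le> \<bar>\<eta>\<bar> / c"
    proof -
      have h1: "\<bar>\<eta>\<bar> \<le> \<bar>\<xi> - \<eta>\<bar> / c" using h assms by (simp add: field_simps)
      have h2: "\<bar>\<xi> - \<eta>\<bar> \<le> \<bar>\<eta>\<bar> / c" using h by simp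
      note tri
      hence "\<bar>\<xi>\<bar> \<le> K * \<bar>\<eta>\<bar>" "\<bar>\<xi>\<bar> \<le> K * \<bar>\<xi> - \<eta>\<bar>" using h1 h2 unfolding K_def
        by (simp_all add: algebra_simps)
      hence xy: "?x \<le> K * ?y" and xz: "?x \<le> K * ?z" using K1 by (auto intro: jb_scale)
      have "\<bar>\<eta>\<bar> \<le> K * \<bar>\<xi> - \<eta>\<bar>" using h1 unfolding K_def by (simp add: algebra_simps)
      hence yz: "?y \<le> K * ?z" using K1 by (rule jb_scale)
      have "\<bar>ff \<delta> s ?x - ff \<delta> s ?y\<bar> \<le> C3 * (exp (\<delta> * sqrt ?y) * ?y powr (s-1)) * (exp (\<delta> * sqrt ?z) * ?z)"
        unfolding C3_def by (rule core3[OF g xyz xy xz yz K1 assms(1,2)])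
      hence "\<bar>Aw \<delta> s \<xi> - Aw \<delta> s \<eta>\<bar> \<le> C3 * (Aw \<delta> (s - 1) \<eta> * Aw \<delta> 1 (\<xi> - \<eta>))"
        by (simp add: Aff Aw1 AwE ff_def mult.assoc)
      from mono[OF this CC1(3)] show ?thesis by (simp only: mult.assoc Aw_nonneg mult_nonneg_nonneg simp_thms)
    qed
  qed
qed

end
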